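(* Let $\mathfrak{g}$ be a product by generators. Then $\dim Z(\mathfrak{g})\ge 6$ and $\dim \mathfrak{g}/C^1\mathfrak{g}\ge 4$. In particular, no filiform Lie algebra is a product by generators.
   Context: All Lie algebras are finite-dimensional, complex, nilpotent and nonabelian (in particular the one-dimensional algebra is excluded). $C^1\mathfrak{g}=[\mathfrak{g},\mathfrak{g}]$, $C^{k+1}\mathfrak{g}=[\mathfrak{g},C^k\mathfrak{g}]$, $Z(\mathfrak{g})$ is the center. Product by generators of two algebras $\mathfrak{g}_1,\mathfrak{g}_2$: take bases $\{X_1,\dots,X_{m_1}\}$, $\{X'_1,\dots,X'_{m_2}\}$ such that $X_1,\dots,X_{n_1}$ generate $\mathfrak{g}_1$ and $X_{n_1+1},\dots,X_{m_1}$ span $C^1\mathfrak{g}_1$, and similarly for $\mathfrak{g}_2$ with $n_2$ generators; $\mathfrak{g}_1\underline{\times}\mathfrak{g}_2$ is the Lie algebra on $\mathfrak{g}_1\oplus\mathfrak{g}_2\oplus\langle Z_1,\dots,Z_{n_1n_2}\rangle$ with the brackets of $\mathfrak{g}_1$ and of $\mathfrak{g}_2$, $[X_i,X'_j]=Z_{(i-1)n_2+j}$ for $i\le n_1$, $j\le n_2$, $[X_i,X'_j]=0$ otherwise, and the $Z_k$ central. A nilpotent Lie algebra $\mathfrak{g}$ is called a product by generators if there exist (nonabelian) subalgebras $\mathfrak{h}_1,\mathfrak{h}_2$ with $\mathfrak{g}\cong\mathfrak{h}_1\underline{\times}\mathfrak{h}_2$. A nilpotent Lie algebra of dimension $n$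 is filiform if $\dim C^k\mathfrak{g}=n-k-1$ for $1\le k\le n-1$ (maximal nilindex). *)

theory Defs
  imports "HOL-Analysis.Analysis"
begin

text \<open>A finite-dimensional complex Lie algebra is modelled as the complex vector
space complex^'n (complex scalar multiplication (*s), linear algebra via the
interpretation vec of Cartesian_Space) together with a bracket br.
Every finite-dimensional complex Lie algebra of positive dimension is isomorphic
to one of this form.\<close>

type_synonym 'n lie_bracket = "complex^'n \<Rightarrow> complex^'n \<Rightarrow> complex^'n"

definition lie_algebra :: "('n::finite) lie_bracket \<Rightarrow> bool" where
  "lie_algebra br \<longleftrightarrow>
     (\<forall>x. Vector_Spaces.linear (*s) (*s) (br x)) \<and>
     (\<forall>y. Vector_Spaces.linear (*s) (*s) (\<lambda>x. br x y)) \<and>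
     (\<forall>x. br x x = 0) \<and>
     (\<forall>x y z. br x (br y z) + br y (br z x) + br z (br x y) = 0)"

text \<open>[A,B]: the linear span of all brackets.\<close>
definition lie_brs :: "('n::finite) lie_bracket \<Rightarrow> (complex^'n) set \<Rightarrow> (complex^'n) set \<Rightarrow> (complex^'n) set" where
  "lie_brs br A B = vec.span {br a b | a b. a \<in> A \<and> b \<in> B}"

text \<open>Lower central series: lcs br 0 = g, lcs br (k+1) = [g, lcs br k]; so lcs br k = C^k g.\<close>
fun lcs :: "('n::finite) lie_bracket \<Rightarrow> nat \<Rightarrow> (complex^'n) set" where
  "lcs br 0 = UNIV"
| "lcs br (Suc k) = lie_brs br UNIV (lcs br k)"

definition lie_nilpotent :: "('n::finite) lie_bracket \<Rightarrow> bool" where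
  "lie_nilpotent br \<longleftrightarrow> (\<exists>k. lcs br k = {0})"

definition lie_nonabelian :: "('n::finite) lie_bracket \<Rightarrow> (complex^'n) set \<Rightarrow> bool" where
  "lie_nonabelian br A \<longleftrightarrow> (\<exists>a\<in>A. \<exists>b\<in>A. br a b \<noteq> 0)"

definition lie_center :: "('n::finite) lie_bracket \<Rightarrow> (complex^'n) set" where
  "lie_center br = {z. \<forall>x. br z x = 0}"

definition lie_subalgebra :: "('n::finite) lie_bracket \<Rightarrow> (complex^'n) set \<Rightarrow> bool" where
  "lie_subalgebra br A \<longleftrightarrow> vec.subspace A \<and> (\<forall>a\<in>A. \<forall>b\<in>A. br a b \<in> A)"

text \<open>Lie subalgebra generated by a set S.\<close>
definition lie_generated :: "('n::finite) lie_bracket \<Rightarrow> (complex^'n) set \<Rightarrow> (complex^'n) set" where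
  "lie_generated br S = \<Inter>{A. lie_subalgebra br A \<and> S \<subseteq> A}"

text \<open>Adapted basis of a subalgebra A: the list X is a basis of A, its first n elements
generate A as a Lie algebra, and the remaining ones span C^1 A = [A,A].\<close>
definition adapted_basis :: "('n::finite) lie_bracket \<Rightarrow> (complex^'n) set \<Rightarrow> (complex^'n) list \<Rightarrow> nat \<Rightarrow> bool" where
  "adapted_basis br A X n \<longleftrightarrow>
     distinct X \<and> vec.independent (set X) \<and> vec.span (set X) = A \<and> n \<le> length X \<and>
     lie_generated br (set (take n X)) = A \<and> vec.span (set (drop n X)) = lie_brs br A A"

text \<open>g is a product by generators: g is isomorphic to h1 x_ h2 for nonabelian
subalgebras h1, h2.  Written through the image of the isomorphism: g has a basis
X @ Y @ Z where X (resp. Y) is an adapted basis of a nonabelian subalgebra A (resp. B)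
with n1 (resp. n2) generators, Z_{i n2 + j} = [X_i, Y_j] for i < n1, j < n2,
[X_i, Y_j] = 0 otherwise, and the Z_k are central.  (Indices are 0-based.)\<close>
definition product_by_generators :: "('n::finite) lie_bracket \<Rightarrow> bool" where
  "product_by_generators br \<longleftrightarrow>
     (\<exists>A B X Y n1 n2 Zs.
        lie_subalgebra br A \<and> lie_subalgebra br B \<and>
        lie_nonabelian br A \<and> lie_nonabelian br B \<and>
        adapted_basis br A X n1 \<and> adapted_basis br B Y n2 \<and>
        length Zs = n1 * n2 \<and>
        (\<forall>i<n1. \<forall>j<n2. Zs ! (i * n2 + j) = br (X ! i) (Y ! j)) \<and>
        (\<forall>i<length X. \<forall>j<length Y. (n1 \<le> i \<or> n2 \<le> j) \<longrightarrow> br (X ! i) (Y ! j) = 0) \<and>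
        (\<forall>z\<in>set Zs. \<forall>x. br z x = 0) \<and>
        distinct (X @ Y @ Zs) \<and> vec.independent (set (X @ Y @ Zs)) \<and>
        vec.span (set (X @ Y @ Zs)) = UNIV)"

definition filiform :: "('n::finite) lie_bracket \<Rightarrow> bool" where
  "filiform br \<longleftrightarrow>
     (\<forall>k. 1 \<le> k \<and> k \<le> vec.dim (UNIV :: (complex^'n) set) - 1 \<longrightarrow>
        vec.dim (lcs br k) = vec.dim (UNIV :: (complex^'n) set) - k - 1)"

end

theory Submission imports Defs begin

lemma la_lin1: "lie_algebra br \<Longrightarrow> Vector_Spaces.linear (*s) (*s) (br x)"
  unfolding lie_algebra_def by blast
lemma la_lin2: "lie_algebra br \<Longrightarrow> Vector_Spaces.linear (*s) (*s) (\<lambda>x. br x y)"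
  unfolding lie_algebra_def by blast

lemma la_anti: assumes "lie_algebra br" shows "br x y = - br y x"
proof -
  have "br (x+y) (x+y) = 0" using assms unfolding lie_algebra_def by blast
  moreover have "br (x+y) (x+y) = br x (x+y) + br y (x+y)"
    using vec.linear_add[OF la_lin2[OF assms, of "x+y"]] by simp
  moreover have "br x (x+y) = br x x + br x y" "br y (x+y) = br y x + br y y"
    using vec.linear_add[OF la_lin1[OF assms]] by auto
  moreover have "br x x = 0" "br y y = 0" using assms unfolding lie_algebra_def by auto
  ultimately show ?thesis by (simp add: eq_neg_iff_add_eq_0)
qed

lemma la_bilin_span:
  assumes la: "lie_algebra br" and W: "vec.subspace W"
    and B: "\<And>b b'. b \<in> B \<Longrightarrow> b' \<in> B \<Longrightarrow> br b b' \<in> W"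
    and u: "u \<in> vec.span B" and v: "v \<in> vec.span B"
  shows "br u v \<in> W"
proof -
  have 1: "br b v \<in> W" if b: "b \<in> B" for b
  proof -
    have "vec.subspace (br b -` W)" by (rule vec.linear_subspace_vimage[OF la_lin1[OF la] W])
    moreover have "B \<subseteq> br b -` W" using B b by auto
    ultimately have "vec.span B \<subseteq> br b -` W" by (rule vec.span_minimal[rotated])
    then show ?thesis using v by auto
  qed
  have "vec.subspace ((\<lambda>x. br x v) -` W)" by (rule vec.linear_subspace_vimage[OF la_lin2[OF la] W])
  moreover have "B \<subseteq> (\<lambda>x. br x v) -` W" using 1 by auto
  ultimately have "vec.span B \<subseteq> (\<lambda>x. br x v) -` W" by (rule vec.span_minimal[rotated])
  then show ?thesis using u by auto
qed

lemma span_disjoint: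
  assumes "vec.independent S" "T1 \<subseteq> S" "T2 \<subseteq> S" "T1 \<inter> T2 = {}"
    "x \<in> vec.span T1" "x \<in> vec.span T2"
  shows "x = 0"
proof -
  obtain g where g: "Vector_Spaces.linear (*s) (*s) g" "\<forall>y\<in>S. g y = (if y \<in> T1 then y else 0)"
    using vec.linear_independent_extend[where f="\<lambda>y. if y \<in> T1 then y else 0", OF assms(1)] by blast
  have "g x = x"
    using vec.linear_eq_on_span[OF g(1) vec.linear_id _ assms(5)] g(2) assms(2) by (metis id_apply subsetD)
  moreover have "g x = 0"
    using vec.linear_eq_0_on_span[OF g(1) _ assms(6)] g(2) assms(3,4) by (metis disjoint_iff subsetD)
  ultimately show ?thesis by simp
qed


lemma sub_span_one:
  assumes la: "lie_algebra br" and T: "\<forall>b\<in>T. \<forall>b'\<in>T. b = b'"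
    and u: "u \<in> vec.span T" and v: "v \<in> vec.span T"
  shows "br u v = 0"
proof -
  have "br u v \<in> {0}"
    by (rule la_bilin_span[OF la vec.subspace_single_0 _ u v])
       (use T la in \<open>auto simp: lie_algebra_def\<close>)
  then show ?thesis by simp
qed

lemma gen_ge2:
  assumes la: "lie_algebra br" and na: "lie_nonabelian br A" and ab: "adapted_basis br A X n"
  shows "2 \<le> n"
proof (rule ccontr)
  assume "\<not> 2 \<le> n"
  then have n1: "n \<le> 1" by simp
  define T where "T = set (take 1 X)"
  have T1: "\<forall>b\<in>T. \<forall>b'\<in>T. b = b'" unfolding T_def by (cases X) auto
  have sub: "lie_subalgebra br (vec.span T)"
    unfolding lie_subalgebra_def using sub_span_one[OF la T1] vec.span_zero
    by (auto simp: vec.subspace_span)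
  have "set (take n X) \<subseteq> T" unfolding T_def using n1 by (simp add: set_take_subset_set_take)
  then have "set (take n X) \<subseteq> vec.span T" using vec.span_superset by blast
  then have "lie_generated br (set (take n X)) \<subseteq> vec.span T"
    unfolding lie_generated_def using sub by blast
  then have "A \<subseteq> vec.span T" using ab unfolding adapted_basis_def by simp
  then show False using na sub_span_one[OF la T1] unfolding lie_nonabelian_def by blast
qed

lemma brs_sub: assumes "lie_subalgebra br A" shows "lie_brs br A A \<subseteq> A"
  using assms unfolding lie_brs_def lie_subalgebra_def
  by (intro vec.span_minimal) auto

lemma lcs_zero: "0 \<in> lcs br k"
  by (cases k) (auto simp: lie_brs_def vec.span_zero)

lemma central_elem:
  assumes la: "lie_algebra br" and nil: "lie_nilpotent br"
    and sa: "lie_subalgebra br A" and na: "lie_nonabelian br A"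
  shows "\<exists>c. c \<noteq> 0 \<and> c \<in> lie_brs br A A \<and> (\<forall>a\<in>A. br a c = 0)"
proof -
  define P where "P m \<longleftrightarrow> lie_brs br A A \<inter> lcs br m = {0}" for m
  obtain m0 where m0: "lcs br m0 = {0}" using nil unfolding lie_nilpotent_def by blast
  have "0 \<in> lie_brs br A A" unfolding lie_brs_def by (rule vec.span_zero)
  then have Pm0: "P m0" unfolding P_def using m0 by auto
  define m where "m = (LEAST m. P m)"
  have Pm: "P m" unfolding m_def by (rule LeastI[of P, OF Pm0])
  obtain a b where ab: "a \<in> A" "b \<in> A" "br a b \<noteq> 0" using na unfolding lie_nonabelian_def by blast
  have "br a b \<in> lie_brs br A A" unfolding lie_brs_def using ab by (intro vec.span_base) blast
  then have nP0: "\<not> P 0" unfolding P_def using ab by auto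
  then have "m \<noteq> 0" using Pm by (metis gr0I)
  then obtain k where k: "m = Suc k" by (cases m) auto
  have "\<not> P k" using not_less_Least[of k P] k unfolding m_def[symmetric] by simp
  then obtain c where c: "c \<noteq> 0" "c \<in> lie_brs br A A" "c \<in> lcs br k"
    unfolding P_def using \<open>0 \<in> lie_brs br A A\<close> lcs_zero[of br k] vec.span_zero by (auto simp: lie_brs_def)
  have "br a' c = 0" if a': "a' \<in> A" for a'
  proof -
    have cA: "c \<in> A" using brs_sub[OF sa] c by auto
    have "br a' c \<in> lie_brs br A A" unfolding lie_brs_def using a' cA by (intro vec.span_base) blast
    moreover have "br a' c \<in> lcs br (Suc k)" using c(3) by (auto simp: lie_brs_def intro!: vec.span_base)
    ultimately show ?thesis using Pm k unfolding P_def by auto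
  qed
  then show ?thesis using c by blast
qed


lemma in_set_drop_nth: "x \<in> set (drop n xs) \<Longrightarrow> \<exists>i. n \<le> i \<and> i < length xs \<and> x = xs ! i"
  by (auto simp: in_set_conv_nth) (metis add.commute le_add2 less_diff_conv)

lemma in_set_nth: "x \<in> set xs \<Longrightarrow> \<exists>i. i < length xs \<and> x = xs ! i"
  by (auto simp: in_set_conv_nth)

lemma central_from:
  assumes la: "lie_algebra br" and S: "vec.span S = UNIV" and b: "\<forall>b\<in>S. br b c = 0"
  shows "c \<in> lie_center br"
proof -
  have "br c x = 0" for x
  proof (rule vec.linear_eq_0_on_span[OF la_lin1[OF la]])
    show "x \<in> vec.span S" using S by simp
    show "br c b = 0" if "b \<in> S" for b using b that la_anti[OF la, of c b] by simp
  qed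
  then show ?thesis unfolding lie_center_def by simp
qed

lemma center_subspace: assumes la: "lie_algebra br" shows "vec.subspace (lie_center br)"
  unfolding vec.subspace_def lie_center_def
  using vec.linear_add[OF la_lin2[OF la]] vec.linear_scale[OF la_lin2[OF la]] vec.linear_0[OF la_lin2[OF la]]
  by auto

lemma idx_lt: "i < n1 \<Longrightarrow> j < (n2::nat) \<Longrightarrow> i * n2 + j < n1 * n2"
proof -
  assume a: "i < n1" "j < n2"
  have "Suc i * n2 \<le> n1 * n2" using a(1) by (intro mult_le_mono1) simp
  then show ?thesis using a(2) by simp
qed


lemma pbg_bounds:
  fixes br :: "('n::finite) lie_bracket"
  assumes la: "lie_algebra br" and nil: "lie_nilpotent br" and pbg: "product_by_generators br"
  shows "vec.dim (lie_center br) \<ge> 6 \<and>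
         vec.dim (UNIV :: (complex^'n) set) - vec.dim (lcs br 1) \<ge> 4"
proof -
  obtain A B X Y n1 n2 Zs where
    sA: "lie_subalgebra br A" and sB: "lie_subalgebra br B" and
    nA: "lie_nonabelian br A" and nB: "lie_nonabelian br B" and
    abX: "adapted_basis br A X n1" and abY: "adapted_basis br B Y n2" and
    lZ: "length Zs = n1 * n2" and
    Zdef: "\<forall>i<n1. \<forall>j<n2. Zs ! (i * n2 + j) = br (X ! i) (Y ! j)" and
    XY0: "\<forall>i<length X. \<forall>j<length Y. (n1 \<le> i \<or> n2 \<le> j) \<longrightarrow> br (X ! i) (Y ! j) = 0" and
    Zc: "\<forall>z\<in>set Zs. \<forall>x. br z x = 0" and
    dist: "distinct (X @ Y @ Zs)" and ind: "vec.independent (set (X @ Y @ Zs))" and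
    spS: "vec.span (set (X @ Y @ Zs)) = UNIV"
    using pbg unfolding product_by_generators_def by blast
  define S where "S = set (X @ Y @ Zs)"
  have n1: "2 \<le> n1" by (rule gen_ge2[OF la nA abX])
  have n2: "2 \<le> n2" by (rule gen_ge2[OF la nB abY])
  have XA: "set X \<subseteq> A" using abX vec.span_superset unfolding adapted_basis_def by blast
  have YB: "set Y \<subseteq> B" using abY vec.span_superset unfolding adapted_basis_def by blast
  have CA: "lie_brs br A A = vec.span (set (drop n1 X))" using abX unfolding adapted_basis_def by simp
  have CB: "lie_brs br B B = vec.span (set (drop n2 Y))" using abY unfolding adapted_basis_def by simp
  have n1X: "n1 \<le> length X" using abX unfolding adapted_basis_def by simp
  have n2Y: "n2 \<le> length Y" using abY unfolding adapted_basis_def by simp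
  have dXY: "set X \<inter> set Y = {}" "set X \<inter> set Zs = {}" "set Y \<inter> set Zs = {}" "distinct Zs"
    using dist by auto
  have dX: "set (drop n1 X) \<subseteq> set X" and dY: "set (drop n2 Y) \<subseteq> set Y" by (auto dest: in_set_dropD)
  obtain c where c: "c \<noteq> 0" "c \<in> vec.span (set (drop n1 X))" "\<forall>a\<in>A. br a c = 0"
    using central_elem[OF la nil sA nA] CA by auto
  obtain d where d: "d \<noteq> 0" "d \<in> vec.span (set (drop n2 Y))" "\<forall>a\<in>B. br a d = 0"
    using central_elem[OF la nil sB nB] CB by auto
  have cY: "br c y = 0" if yY: "y \<in> set Y" for y
  proof -
    obtain j where j: "j < length Y" "y = Y ! j" using in_set_nth[OF yY] by auto
    show ?thesis
    proof (rule vec.linear_eq_0_on_span[OF la_lin2[OF la, of y] _ c(2)])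
      fix b assume "b \<in> set (drop n1 X)"
      then obtain i where i: "n1 \<le> i" "i < length X" "b = X ! i" using in_set_drop_nth by metis
      show "br b y = 0" using XY0 i j by simp
    qed
  qed
  have dX0: "br x d = 0" if xX: "x \<in> set X" for x
  proof -
    obtain i where i: "i < length X" "x = X ! i" using in_set_nth[OF xX] by auto
    show ?thesis
    proof (rule vec.linear_eq_0_on_span[OF la_lin1[OF la, of x] _ d(2)])
      fix b assume "b \<in> set (drop n2 Y)"
      then obtain j where j: "n2 \<le> j" "j < length Y" "b = Y ! j" using in_set_drop_nth by metis
      show "br x b = 0" using XY0 i j by simp
    qed
  qed
  have cc: "c \<in> lie_center br"
  proof (rule central_from[OF la spS], intro ballI)
    fix b assume "b \<in> set (X @ Y @ Zs)"
    then consider "b \<in> set X" | "b \<in> set Y" | "b \<in> set Zs" by auto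
    then show "br b c = 0"
    proof cases
      case 1 then show ?thesis using c(3) XA by auto
    next
      case 2 then show ?thesis using cY la_anti[OF la, of b c] by simp
    next
      case 3 then show ?thesis using Zc by auto
    qed
  qed
  have dc: "d \<in> lie_center br"
  proof (rule central_from[OF la spS], intro ballI)
    fix b assume "b \<in> set (X @ Y @ Zs)"
    then consider "b \<in> set X" | "b \<in> set Y" | "b \<in> set Zs" by auto
    then show "br b d = 0"
    proof cases
      case 1 then show ?thesis using dX0 by auto
    next
      case 2 then show ?thesis using d(3) YB by auto
    next
      case 3 then show ?thesis using Zc by auto
    qed
  qed
  have Zcc: "set Zs \<subseteq> lie_center br" using Zc unfolding lie_center_def by auto
  have dnot: "d \<notin> vec.span (set Zs)"
  proof
    assume "d \<in> vec.span (set Zs)"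
    moreover have "set (drop n2 Y) \<subseteq> set (X @ Y @ Zs)" "set Zs \<subseteq> set (X @ Y @ Zs)"
      "set (drop n2 Y) \<inter> set Zs = {}" using dY dXY by auto
    ultimately have "d = 0" using span_disjoint[OF ind, of "set (drop n2 Y)" "set Zs" d] d(2) by simp
    then show False using d(1) by simp
  qed
  have cnot: "c \<notin> vec.span (insert d (set Zs))"
  proof
    assume a: "c \<in> vec.span (insert d (set Zs))"
    have "insert d (set Zs) \<subseteq> vec.span (set (drop n2 Y) \<union> set Zs)"
      using d(2) vec.span_mono[of "set (drop n2 Y)" "set (drop n2 Y) \<union> set Zs"]
      by (auto intro: vec.span_base)
    then have "vec.span (insert d (set Zs)) \<subseteq> vec.span (set (drop n2 Y) \<union> set Zs)"
      by (simp add: vec.span_minimal)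
    moreover have "set (drop n1 X) \<subseteq> set (X @ Y @ Zs)" "set (drop n2 Y) \<union> set Zs \<subseteq> set (X @ Y @ Zs)"
      "set (drop n1 X) \<inter> (set (drop n2 Y) \<union> set Zs) = {}" using dX dY dXY by auto
    ultimately have "c = 0"
      using a span_disjoint[OF ind, of "set (drop n1 X)" "set (drop n2 Y) \<union> set Zs" c] c(2) by blast
    then show False using c(1) by simp
  qed
  have indZ: "vec.independent (set Zs)" using vec.independent_mono[OF ind] by auto
  have indI: "vec.independent (insert c (insert d (set Zs)))"
    by (intro vec.independent_insertI cnot dnot indZ)
  have "card (insert c (insert d (set Zs))) = n1 * n2 + 2"
  proof -
    have "c \<notin> insert d (set Zs)" using cnot vec.span_base by blast
    moreover have "d \<notin> set Zs" using dnot vec.span_base by blast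
    ultimately show ?thesis using distinct_card[OF dXY(4)] lZ by simp
  qed
  moreover have "card (insert c (insert d (set Zs))) \<le> vec.dim (lie_center br)"
    by (rule vec.independent_card_le_dim[OF _ indI]) (use cc dc Zcc in auto)
  moreover have "4 \<le> n1 * n2" using mult_le_mono[OF n1 n2] by simp
  ultimately have part1: "6 \<le> vec.dim (lie_center br)" by simp
  define W0 where "W0 = set (drop n1 X) \<union> set (drop n2 Y) \<union> set Zs"
  have sW: "vec.subspace (vec.span W0)" by (rule vec.subspace_span)
  have XXW: "br b b' \<in> vec.span W0" if "b \<in> set X" "b' \<in> set X" for b b'
  proof -
    have "br b b' \<in> lie_brs br A A" unfolding lie_brs_def using that XA by (intro vec.span_base) blast
    then show ?thesis unfolding CA W0_def using vec.span_mono[of "set (drop n1 X)" W0] W0_def by auto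
  qed
  have YYW: "br b b' \<in> vec.span W0" if "b \<in> set Y" "b' \<in> set Y" for b b'
  proof -
    have "br b b' \<in> lie_brs br B B" unfolding lie_brs_def using that YB by (intro vec.span_base) blast
    then show ?thesis unfolding CB W0_def using vec.span_mono[of "set (drop n2 Y)" W0] W0_def by auto
  qed
  have XYW: "br b b' \<in> vec.span W0" if bb: "b \<in> set X" "b' \<in> set Y" for b b'
  proof -
    obtain i where i: "i < length X" "b = X ! i" using in_set_nth[OF bb(1)] by auto
    obtain j where j: "j < length Y" "b' = Y ! j" using in_set_nth[OF bb(2)] by auto
    show ?thesis
    proof (cases "i < n1 \<and> j < n2")
      case True
      then have "br b b' = Zs ! (i * n2 + j)" using Zdef i j by simp
      moreover have "i * n2 + j < length Zs" using idx_lt True lZ by simp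
      ultimately have "br b b' \<in> W0" unfolding W0_def by simp
      then show ?thesis by (rule vec.span_base)
    next
      case False
      then have "n1 \<le> i \<or> n2 \<le> j" by (simp add: not_less)
      then have "br b b' = 0" using XY0 i j by blast
      then show ?thesis by (simp add: vec.span_zero)
    qed
  qed
  have basW: "br b b' \<in> vec.span W0" if bS: "b \<in> S" "b' \<in> S" for b b'
  proof -
    have Zb: "br z x = 0" "br x z = 0" if "z \<in> set Zs" for z x
      using Zc that la_anti[OF la, of x z] by auto
    from bS consider "b \<in> set X" | "b \<in> set Y" | "b \<in> set Zs" unfolding S_def by auto
    then show ?thesis
    proof cases
      case 1
      from bS consider "b' \<in> set X" | "b' \<in> set Y" | "b' \<in> set Zs" unfolding S_def by auto
      then show ?thesis
        by cases (use 1 XXW XYW Zb vec.span_zero in auto)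
    next
      case 2
      from bS consider "b' \<in> set X" | "b' \<in> set Y" | "b' \<in> set Zs" unfolding S_def by auto
      then show ?thesis
      proof cases
        case 1
        then have "br b' b \<in> vec.span W0" using XYW 2 by auto
        then show ?thesis using la_anti[OF la, of b b'] vec.span_neg by metis
      qed (use 2 YYW Zb vec.span_zero in auto)
    next
      case 3 then show ?thesis using Zb vec.span_zero by auto
    qed
  qed
  have "lcs br 1 \<subseteq> vec.span W0"
    unfolding One_nat_def lcs.simps lie_brs_def
    by (rule vec.span_minimal[OF _ sW])
       (auto intro!: la_bilin_span[OF la sW basW] simp: S_def spS[simplified])
  then have "vec.dim (lcs br 1) \<le> card W0"
    by (intro vec.dim_le_card) (auto simp: W0_def)
  also have "card W0 \<le> (length X - n1) + (length Y - n2) + length Zs"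
  proof -
    have "card W0 \<le> card (set (drop n1 X)) + card (set (drop n2 Y)) + card (set Zs)"
      unfolding W0_def using card_Un_le[of "set (drop n1 X) \<union> set (drop n2 Y)" "set Zs"] card_Un_le[of "set (drop n1 X)" "set (drop n2 Y)"] by linarith
    also have "\<dots> \<le> (length X - n1) + (length Y - n2) + length Zs"
      using card_length[of "drop n1 X"] card_length[of "drop n2 Y"] card_length[of Zs] by simp
    finally show ?thesis .
  qed
  finally have dl: "vec.dim (lcs br 1) \<le> (length X - n1) + (length Y - n2) + length Zs" .
  have "vec.dim (UNIV :: (complex^'n) set) = card S"
    using vec.dim_span_eq_card_independent[OF ind] unfolding spS S_def .
  also have "card S = length X + length Y + length Zs"
    unfolding S_def using distinct_card[OF dist] by simp
  finally have "vec.dim (UNIV :: (complex^'n) set) = length X + length Y + length Zs" .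
  then have "vec.dim (UNIV :: (complex^'n) set) - vec.dim (lcs br 1) \<ge> 4"
    using dl n1 n2 n1X n2Y by linarith
  then show ?thesis using part1 by simp
qed


theorem mainTheorem6:
  fixes br :: "('n::finite) lie_bracket"
  assumes "lie_algebra br" and "lie_nilpotent br" and "lie_nonabelian br UNIV"
  shows "(product_by_generators br \<longrightarrow>
            vec.dim (lie_center br) \<ge> 6 \<and>
            vec.dim (UNIV :: (complex^'n) set) - vec.dim (lcs br 1) \<ge> 4) \<and>
         (filiform br \<longrightarrow> \<not> product_by_generators br)"
proof (rule conjI)
  show "product_by_generators br \<longrightarrow>
            vec.dim (lie_center br) \<ge> 6 \<and>
            vec.dim (UNIV :: (complex^'n) set) - vec.dim (lcs br 1) \<ge> 4"
    using pbg_bounds[OF assms(1,2)] by blast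
next
  show "filiform br \<longrightarrow> \<not> product_by_generators br"
  proof (intro impI notI)
    assume fil: "filiform br" and "product_by_generators br"
    then have b: "vec.dim (UNIV :: (complex^'n) set) - vec.dim (lcs br 1) \<ge> 4"
      using pbg_bounds[OF assms(1,2)] by blast
    then have N: "vec.dim (UNIV :: (complex^'n) set) \<ge> 4" by linarith
    have "vec.dim (lcs br 1) = vec.dim (UNIV :: (complex^'n) set) - 1 - 1"
      using fil[unfolded filiform_def, rule_format, of 1] N by simp
    then show False using b N by linarith
  qed
qed

end
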